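(* Let $(\mathfrak{g},[\cdot,\cdot]_{\mathfrak{g}})$ be a Leibniz algebra over a field $\mathbf{K}$, $(V;\rho^L,\rho^R)$ a representation, $T:V\to\mathfrak{g}$ a relative Rota-Baxter operator, and $T_t=\sum_{i=0}^n\mathfrak{T}_it^i$ an order $n$ deformation of $T$. Then $T_t$ is extendable if and only if the obstruction class $[\mathrm{Ob}_T]\in\mathcal{H}^2(V,\mathfrak{g})$ is trivial, where $\mathrm{Ob}_T(u,v)=\sum_{i+j=n+1,\ i,j\ge1}\big([\mathfrak{T}_iu,\mathfrak{T}_jv]_{\mathfrak{g}}-\mathfrak{T}_i(\rho^L(\mathfrak{T}_ju)v+\rho^R(\mathfrak{T}_jv)u)\big)$ for $u,v\in V$.
   Context: A Leibniz algebra is a vector space $\mathfrak{g}$ with bilinear $[\cdot,\cdot]_{\mathfrak{g}}$ satisfying $[x,[y,z]_{\mathfrak{g}}]_{\mathfrak{g}}=[[x,y]_{\mathfrak{g}},z]_{\mathfrak{g}}+[y,[x,z]_{\mathfrak{g}}]_{\mathfrak{g}}$. A representation $(V;\rho^L,\rho^R)$: linear $\rho^L,\rho^R:\mathfrak{g}\to\mathfrak{gl}(V)$ with $\rho^L([x,y]_{\mathfrak{g}})=[\rho^L(x),\rho^L(y)]$, $\rho^R([x,y]_{\mathfrak{g}})=[\rho^L(x),\rho^R(y)]$, $\rho^R(y)\rho^L(x)=-\rho^R(y)\rho^R(x)$. A relative Rota-Baxter operator is a linear $T:V\to\mathfrak{g}$ with $[Tv_1,Tv_2]_{\mathfrak{g}}=T(\rho^L(Tv_1)v_2+\rho^R(Tv_2)v_1)$.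 Cohomology of $T$: $C^n(V,\mathfrak{g})=\mathrm{Hom}(\otimes^nV,\mathfrak{g})$, $C^0=\mathfrak{g}$, $\partial_T:C^n\to C^{n+1}$, $(\partial_Tf)(v_1,\dots,v_{n+1})=\sum_{i=1}^n(-1)^{i+1}[Tv_i,f(v_1,\dots,\hat v_i,\dots,v_{n+1})]_{\mathfrak{g}}-\sum_{i=1}^n(-1)^{i+1}T\rho^R(f(v_1,\dots,\hat v_i,\dots,v_{n+1}))v_i+(-1)^{n+1}[f(v_1,\dots,v_n),Tv_{n+1}]_{\mathfrak{g}}+(-1)^nT\rho^L(f(v_1,\dots,v_n))v_{n+1}+\sum_{1\le i<j\le n+1}(-1)^if(v_1,\dots,\hat v_i,\dots,v_{j-1},\rho^L(Tv_i)v_j+\rho^R(Tv_j)v_i,v_{j+1},\dots,v_{n+1})$; $\mathcal{Z}^k=\ker\partial_T\cap C^k$, $\mathcal{B}^k=\partial_T(C^{k-1})$, $\mathcal{H}^k=\mathcal{Z}^k/\mathcal{B}^k$. (The 2-cochain $\mathrm{Ob}_T$ is a 2-cocycle, so $[\mathrm{Ob}_T]$ is defined.) An order $n$ deformation of $T$ is $T_t=\sum_{i=0}^n\mathfrak{T}_it^i$ with $\mathfrak{T}_0=T$, $\mathfrak{T}_i\in\mathrm{Hom}(V,\mathfrak{g})$, viewed as a $\mathbf{K}[t]/(t^{n+1})$-module map $V[t]/(t^{n+1})\to\mathfrak{g}[t]/(t^{n+1})$ (bracket and $\rho^L,\rho^R$ extended $\mathbf{K}[t]/(t^{n+1})$-bilinearly),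 such that $[T_t(u),T_t(v)]_{\mathfrak{g}}=T_t(\rho^L(T_t(u))v+\rho^R(T_t(v))u)$ for all $u,v\in V$. It is extendable if there is $\mathfrak{T}_{n+1}\in\mathrm{Hom}(V,\mathfrak{g})$ with $T_t+\mathfrak{T}_{n+1}t^{n+1}$ an order $n+1$ deformation of $T$. *)

theory Defs
  imports Main "HOL.Vector_Spaces"
begin

text \<open>Vector spaces over a field 'k are given by scalar multiplications
  smg (on the Leibniz algebra 'g) and smv (on the representation space 'v);
  linearity is the library notion Vector_Spaces.linear.\<close>

definition bilinear_map ::
  "('k::field \<Rightarrow> 'a::ab_group_add \<Rightarrow> 'a) \<Rightarrow> ('k \<Rightarrow> 'b::ab_group_add \<Rightarrow> 'b)
   \<Rightarrow> ('k \<Rightarrow> 'c::ab_group_add \<Rightarrow> 'c) \<Rightarrow> ('a \<Rightarrow> 'b \<Rightarrow> 'c) \<Rightarrow> bool" where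
  "bilinear_map sa sb sc B \<longleftrightarrow>
     (\<forall>x. Vector_Spaces.linear sb sc (\<lambda>y. B x y)) \<and>
     (\<forall>y. Vector_Spaces.linear sa sc (\<lambda>x. B x y))"

definition leibniz_algebra ::
  "('k::field \<Rightarrow> 'g::ab_group_add \<Rightarrow> 'g) \<Rightarrow> ('g \<Rightarrow> 'g \<Rightarrow> 'g) \<Rightarrow> bool" where
  "leibniz_algebra smg br \<longleftrightarrow>
     bilinear_map smg smg smg br \<and>
     (\<forall>x y z. br x (br y z) = br (br x y) z + br y (br x z))"

definition leibniz_rep ::
  "('k::field \<Rightarrow> 'g::ab_group_add \<Rightarrow> 'g) \<Rightarrow> ('k \<Rightarrow> 'v::ab_group_add \<Rightarrow> 'v) \<Rightarrow>
   ('g \<Rightarrow> 'g \<Rightarrow> 'g) \<Rightarrow> ('g \<Rightarrow> 'v \<Rightarrow> 'v) \<Rightarrow> ('g \<Rightarrow> 'v \<Rightarrow> 'v) \<Rightarrow> bool" where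
  "leibniz_rep smg smv br rhoL rhoR \<longleftrightarrow>
     bilinear_map smg smv smv rhoL \<and> bilinear_map smg smv smv rhoR \<and>
     (\<forall>x y v. rhoL (br x y) v = rhoL x (rhoL y v) - rhoL y (rhoL x v)) \<and>
     (\<forall>x y v. rhoR (br x y) v = rhoL x (rhoR y v) - rhoR y (rhoL x v)) \<and>
     (\<forall>x y v. rhoR y (rhoL x v) = - rhoR y (rhoR x v))"

definition relative_RB ::
  "('k::field \<Rightarrow> 'g::ab_group_add \<Rightarrow> 'g) \<Rightarrow> ('k \<Rightarrow> 'v::ab_group_add \<Rightarrow> 'v) \<Rightarrow>
   ('g \<Rightarrow> 'g \<Rightarrow> 'g) \<Rightarrow> ('g \<Rightarrow> 'v \<Rightarrow> 'v) \<Rightarrow> ('g \<Rightarrow> 'v \<Rightarrow> 'v) \<Rightarrow> ('v \<Rightarrow> 'g) \<Rightarrow> bool" where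
  "relative_RB smg smv br rhoL rhoR T \<longleftrightarrow>
     Vector_Spaces.linear smv smg T \<and>
     (\<forall>v1 v2. br (T v1) (T v2) = T (rhoL (T v1) v2 + rhoR (T v2) v1))"

text \<open>Order n deformation T_t = sum_{i<=n} Tc i t^i, with the defining identity
  in K[t]/(t^(n+1)) written out coefficientwise: for each k <= n, the
  coefficient of t^k on both sides agrees.\<close>
definition order_deformation ::
  "('k::field \<Rightarrow> 'g::ab_group_add \<Rightarrow> 'g) \<Rightarrow> ('k \<Rightarrow> 'v::ab_group_add \<Rightarrow> 'v) \<Rightarrow>
   ('g \<Rightarrow> 'g \<Rightarrow> 'g) \<Rightarrow> ('g \<Rightarrow> 'v \<Rightarrow> 'v) \<Rightarrow> ('g \<Rightarrow> 'v \<Rightarrow> 'v) \<Rightarrow> ('v \<Rightarrow> 'g) \<Rightarrow>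
   nat \<Rightarrow> (nat \<Rightarrow> 'v \<Rightarrow> 'g) \<Rightarrow> bool" where
  "order_deformation smg smv br rhoL rhoR T n Tc \<longleftrightarrow>
     Tc 0 = T \<and> (\<forall>i\<le>n. Vector_Spaces.linear smv smg (Tc i)) \<and>
     (\<forall>k\<le>n. \<forall>u v.
        (\<Sum>i\<le>k. br (Tc i u) (Tc (k - i) v)) =
        (\<Sum>i\<le>k. Tc i (rhoL (Tc (k - i) u) v + rhoR (Tc (k - i) v) u)))"

definition extendable ::
  "('k::field \<Rightarrow> 'g::ab_group_add \<Rightarrow> 'g) \<Rightarrow> ('k \<Rightarrow> 'v::ab_group_add \<Rightarrow> 'v) \<Rightarrow>
   ('g \<Rightarrow> 'g \<Rightarrow> 'g) \<Rightarrow> ('g \<Rightarrow> 'v \<Rightarrow> 'v) \<Rightarrow> ('g \<Rightarrow> 'v \<Rightarrow> 'v) \<Rightarrow> ('v \<Rightarrow> 'g) \<Rightarrow>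
   nat \<Rightarrow> (nat \<Rightarrow> 'v \<Rightarrow> 'g) \<Rightarrow> bool" where
  "extendable smg smv br rhoL rhoR T n Tc \<longleftrightarrow>
     (\<exists>T'. Vector_Spaces.linear smv smg T' \<and>
        order_deformation smg smv br rhoL rhoR T (Suc n) (Tc(Suc n := T')))"

text \<open>Cochains: an n-cochain is a function on lists (of length n) of vectors
  that is Vector_Spaces.linear in each of the n slots (i.e. an element of Hom(V^{\<otimes>n}, g)).\<close>
definition cochain ::
  "('k::field \<Rightarrow> 'v::ab_group_add \<Rightarrow> 'v) \<Rightarrow> ('k \<Rightarrow> 'g::ab_group_add \<Rightarrow> 'g) \<Rightarrow>
   nat \<Rightarrow> ('v list \<Rightarrow> 'g) \<Rightarrow> bool" where
  "cochain smv smg n f \<longleftrightarrow>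
     (\<forall>i<n. \<forall>xs. length xs = n \<longrightarrow> Vector_Spaces.linear smv smg (\<lambda>v. f (xs[i := v])))"

definition del_at :: "nat \<Rightarrow> 'a list \<Rightarrow> 'a list" where
  "del_at i xs = take i xs @ drop (Suc i) xs"

definition sgn_pow :: "nat \<Rightarrow> 'a::ab_group_add \<Rightarrow> 'a" where
  "sgn_pow k x = (if even k then x else - x)"

text \<open>The coboundary d_T : C^n \<rightarrow> C^(n+1), on lists vs = [v_1,...,v_(n+1)],
  using 0-based indices (paper index i corresponds to position i-1).\<close>
definition coboundary ::
  "('g::ab_group_add \<Rightarrow> 'g \<Rightarrow> 'g) \<Rightarrow> ('g \<Rightarrow> 'v \<Rightarrow> 'v) \<Rightarrow> ('g \<Rightarrow> 'v::ab_group_add \<Rightarrow> 'v) \<Rightarrow>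
   ('v \<Rightarrow> 'g) \<Rightarrow> nat \<Rightarrow> ('v list \<Rightarrow> 'g) \<Rightarrow> 'v list \<Rightarrow> 'g" where
  "coboundary br rhoL rhoR T n f vs =
     (\<Sum>p<n. sgn_pow p (br (T (vs ! p)) (f (del_at p vs))))
   - (\<Sum>p<n. sgn_pow p (T (rhoR (f (del_at p vs)) (vs ! p))))
   + sgn_pow (Suc n) (br (f (take n vs)) (T (vs ! n)))
   + sgn_pow n (T (rhoL (f (take n vs)) (vs ! n)))
   + (\<Sum>q\<le>n. \<Sum>p<q. sgn_pow (Suc p)
        (f (del_at p (vs[q := rhoL (T (vs ! p)) (vs ! q) + rhoR (T (vs ! q)) (vs ! p)]))))"

definition is_coboundary ::
  "('k::field \<Rightarrow> 'g::ab_group_add \<Rightarrow> 'g) \<Rightarrow> ('k \<Rightarrow> 'v::ab_group_add \<Rightarrow> 'v) \<Rightarrow>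
   ('g \<Rightarrow> 'g \<Rightarrow> 'g) \<Rightarrow> ('g \<Rightarrow> 'v \<Rightarrow> 'v) \<Rightarrow> ('g \<Rightarrow> 'v \<Rightarrow> 'v) \<Rightarrow> ('v \<Rightarrow> 'g) \<Rightarrow>
   nat \<Rightarrow> ('v list \<Rightarrow> 'g) \<Rightarrow> bool" where
  "is_coboundary smg smv br rhoL rhoR T k c \<longleftrightarrow>
     (\<exists>f. cochain smv smg (k - 1) f \<and>
        (\<forall>vs. length vs = k \<longrightarrow> c vs = coboundary br rhoL rhoR T (k - 1) f vs))"

definition obstruction ::
  "('g::ab_group_add \<Rightarrow> 'g \<Rightarrow> 'g) \<Rightarrow> ('g \<Rightarrow> 'v \<Rightarrow> 'v) \<Rightarrow> ('g \<Rightarrow> 'v::ab_group_add \<Rightarrow> 'v) \<Rightarrow>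
   nat \<Rightarrow> (nat \<Rightarrow> 'v \<Rightarrow> 'g) \<Rightarrow> 'v list \<Rightarrow> 'g" where
  "obstruction br rhoL rhoR n Tc vs =
     (let u = vs ! 0; v = vs ! 1 in
      \<Sum>i\<in>{1..n}. br (Tc i u) (Tc (Suc n - i) v)
               - Tc i (rhoL (Tc (Suc n - i) u) v + rhoR (Tc (Suc n - i) v) u))"

end

theory Submission
  imports Defs
begin

lemma lin_add: "Vector_Spaces.linear s1 s2 f \<Longrightarrow> f (x + y) = f x + f y"
  by (simp add: linear_iff)

lemma lin_neg: "Vector_Spaces.linear s1 s2 f \<Longrightarrow> f (- x) = - f x"
  using module_hom_iff_linear[of s1 s2 f] module_hom.neg by blast

lemma lin_negf: "Vector_Spaces.linear s1 s2 f \<Longrightarrow> Vector_Spaces.linear s1 s2 (\<lambda>x. - f x)"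
proof -
  assume l: "Vector_Spaces.linear s1 s2 f"
  then have v: "vector_space s2" by (simp add: linear_iff)
  then have m: "module s2" by (simp add: module_iff_vector_space)
  show ?thesis using l lin_neg[OF l] module.scale_minus_right[OF m]
    by (simp add: linear_iff)
qed

lemma sum_split: "(\<Sum>i\<le>Suc n. g i) = g 0 + (\<Sum>i\<in>{1..n}. g i) + (g (Suc n) :: 'a::ab_group_add)"
proof -
  have "(\<Sum>i\<le>n. g i) = g 0 + (\<Sum>i\<in>{1..n}. g i)"
  proof -
    have "{..n} = insert 0 {1..n}" by auto
    then show ?thesis by simp
  qed
  then show ?thesis by simp
qed

lemma lin_diff: "Vector_Spaces.linear s1 s2 f \<Longrightarrow> f (x - y) = f x - f y"
  using module_hom_iff_linear[of s1 s2 f] module_hom.diff by blast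

lemma abs_eq: "((a::'a::ab_group_add) + L + b = c + R + d) \<longleftrightarrow> (L - R = - (a + b - c - d))"
  by (simp add: algebra_simps)

lemma neg4: "- (a::'a::ab_group_add) + - b - - c - - d = - (a + b - c - d)"
  by (simp add: algebra_simps)

definition DD where
  "DD br rhoL rhoR T F u v = br (T u) (F v) + br (F u) (T v) - T (rhoL (F u) v + rhoR (F v) u)
      - F (rhoL (T u) v + rhoR (T v) u)"

lemma Dneg0: fixes br :: "'g::ab_group_add \<Rightarrow> 'g \<Rightarrow> 'g" and rhoL rhoR :: "'g \<Rightarrow> 'v::ab_group_add \<Rightarrow> 'v"
  assumes brL: "\<And>x y. br x (- y) = - br x y" and brR: "\<And>x y. br (- x) y = - br x y"
  and rL: "\<And>x v. rhoL (- x) v = - rhoL x v" and rR: "\<And>x v. rhoR (- x) v = - rhoR x v"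
  and Tn: "\<And>x. T (- x) = - T x"
  shows "DD br rhoL rhoR T (\<lambda>v. - F v) u v = - DD br rhoL rhoR T F u v"
proof -
  have e: "- rhoL (F u) v + - rhoR (F v) u = - (rhoL (F u) v + rhoR (F v) u)" by simp
  show ?thesis unfolding DD_def by (simp only: brL brR rL rR e Tn neg4)
qed

theorem theorem3p26:
  fixes smg :: "'k::field \<Rightarrow> 'g::ab_group_add \<Rightarrow> 'g"
    and smv :: "'k \<Rightarrow> 'v::ab_group_add \<Rightarrow> 'v"
    and br :: "'g \<Rightarrow> 'g \<Rightarrow> 'g"
    and rhoL rhoR :: "'g \<Rightarrow> 'v \<Rightarrow> 'v"
    and T :: "'v \<Rightarrow> 'g"
    and n :: nat
    and Tc :: "nat \<Rightarrow> 'v \<Rightarrow> 'g"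
  assumes "Vector_Spaces.vector_space smg"
    and "Vector_Spaces.vector_space smv"
    and "leibniz_algebra smg br"
    and "leibniz_rep smg smv br rhoL rhoR"
    and "relative_RB smg smv br rhoL rhoR T"
    and "order_deformation smg smv br rhoL rhoR T n Tc"
  shows "extendable smg smv br rhoL rhoR T n Tc \<longleftrightarrow>
         is_coboundary smg smv br rhoL rhoR T 2 (obstruction br rhoL rhoR n Tc)"
proof -
  have linT: "Vector_Spaces.linear smv smg T" using assms(5) by (simp add: relative_RB_def)
  have brL: "\<And>x y. br x (- y) = - br x y" and brR: "\<And>x y. br (- x) y = - br x y"
    using assms(3) unfolding leibniz_algebra_def bilinear_map_def
    by (auto intro: lin_neg[where f="\<lambda>y. br _ y"] lin_neg[where f="\<lambda>x. br x _"])
  have rL: "\<And>x v. rhoL (- x) v = - rhoL x v" and rR: "\<And>x v. rhoR (- x) v = - rhoR x v"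
    using assms(4) unfolding leibniz_rep_def bilinear_map_def
    by (auto intro: lin_neg[where f="\<lambda>x. rhoL x _"] lin_neg[where f="\<lambda>x. rhoR x _"])
  have Dneg: "DD br rhoL rhoR T (\<lambda>v. - F v) u v = - DD br rhoL rhoR T F u v" for F u v
    by (rule Dneg0[where br=br and rhoL=rhoL and rhoR=rhoR and T=T, OF brL brR rL rR lin_neg[OF linT]])
  have cob: "coboundary br rhoL rhoR T 1 f [u, v] = DD br rhoL rhoR T (\<lambda>v. f [v]) u v" for f u v
    unfolding coboundary_def DD_def using lin_add[OF linT]
    by (simp add: sgn_pow_def del_at_def)
  have od: "order_deformation smg smv br rhoL rhoR T (Suc n) (Tc(Suc n := T')) \<longleftrightarrow>
     (\<forall>u v. obstruction br rhoL rhoR n Tc [u, v] = - DD br rhoL rhoR T T' u v)"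
    if linT': "Vector_Spaces.linear smv smg T'" for T'
  proof -
    have od0: "Tc 0 = T" "\<forall>i\<le>n. Vector_Spaces.linear smv smg (Tc i)"
      "\<forall>k\<le>n. \<forall>u v. (\<Sum>i\<le>k. br (Tc i u) (Tc (k - i) v)) =
        (\<Sum>i\<le>k. Tc i (rhoL (Tc (k - i) u) v + rhoR (Tc (k - i) v) u))"
      using assms(6) unfolding order_deformation_def by auto
    have A: "(Tc(Suc n := T')) 0 = T" "\<forall>i\<le>Suc n. Vector_Spaces.linear smv smg ((Tc(Suc n := T')) i)"
      using od0 linT' by (auto simp: le_Suc_eq)
    have B: "\<forall>k\<le>n. \<forall>u v. (\<Sum>i\<le>k. br ((Tc(Suc n := T')) i u) ((Tc(Suc n := T')) (k - i) v)) =
        (\<Sum>i\<le>k. (Tc(Suc n := T')) i (rhoL ((Tc(Suc n := T')) (k - i) u) v + rhoR ((Tc(Suc n := T')) (k - i) v) u))"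
    proof (intro allI impI)
      fix k u v assume k: "k \<le> n"
      have "(\<Sum>i\<le>k. br ((Tc(Suc n := T')) i u) ((Tc(Suc n := T')) (k - i) v)) = (\<Sum>i\<le>k. br (Tc i u) (Tc (k - i) v))"
        by (rule sum.cong) (use k in auto)
      moreover have "(\<Sum>i\<le>k. (Tc(Suc n := T')) i (rhoL ((Tc(Suc n := T')) (k - i) u) v + rhoR ((Tc(Suc n := T')) (k - i) v) u))
        = (\<Sum>i\<le>k. Tc i (rhoL (Tc (k - i) u) v + rhoR (Tc (k - i) v) u))"
        by (rule sum.cong) (use k in auto)
      ultimately show "(\<Sum>i\<le>k. br ((Tc(Suc n := T')) i u) ((Tc(Suc n := T')) (k - i) v)) =
        (\<Sum>i\<le>k. (Tc(Suc n := T')) i (rhoL ((Tc(Suc n := T')) (k - i) u) v + rhoR ((Tc(Suc n := T')) (k - i) v) u))"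
        using od0(3) k by simp
    qed
    have C: "((\<Sum>i\<le>Suc n. br ((Tc(Suc n := T')) i u) ((Tc(Suc n := T')) (Suc n - i) v)) =
        (\<Sum>i\<le>Suc n. (Tc(Suc n := T')) i (rhoL ((Tc(Suc n := T')) (Suc n - i) u) v + rhoR ((Tc(Suc n := T')) (Suc n - i) v) u)))
      \<longleftrightarrow> obstruction br rhoL rhoR n Tc [u, v] = - DD br rhoL rhoR T T' u v" for u v
    proof -
      have e1: "(\<Sum>i\<in>{1..n}. br ((Tc(Suc n := T')) i u) ((Tc(Suc n := T')) (Suc n - i) v)) = (\<Sum>i\<in>{1..n}. br (Tc i u) (Tc (Suc n - i) v))"
        by (rule sum.cong) auto
      have e2: "(\<Sum>i\<in>{1..n}. (Tc(Suc n := T')) i (rhoL ((Tc(Suc n := T')) (Suc n - i) u) v + rhoR ((Tc(Suc n := T')) (Suc n - i) v) u))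
         = (\<Sum>i\<in>{1..n}. Tc i (rhoL (Tc (Suc n - i) u) v + rhoR (Tc (Suc n - i) v) u))"
        by (rule sum.cong) auto
      have ob: "obstruction br rhoL rhoR n Tc [u, v] = (\<Sum>i\<in>{1..n}. br (Tc i u) (Tc (Suc n - i) v))
          - (\<Sum>i\<in>{1..n}. Tc i (rhoL (Tc (Suc n - i) u) v + rhoR (Tc (Suc n - i) v) u))"
        unfolding obstruction_def by (simp add: sum_subtractf)
      have l1: "(\<Sum>i\<le>Suc n. br ((Tc(Suc n := T')) i u) ((Tc(Suc n := T')) (Suc n - i) v)) = br (T u) (T' v) +
          (\<Sum>i\<in>{1..n}. br (Tc i u) (Tc (Suc n - i) v)) + br (T' u) (T v)"
        unfolding sum_split[of _ n] e1 using od0(1) by simp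
      have l2: "(\<Sum>i\<le>Suc n. (Tc(Suc n := T')) i (rhoL ((Tc(Suc n := T')) (Suc n - i) u) v + rhoR ((Tc(Suc n := T')) (Suc n - i) v) u)) =
          T (rhoL (T' u) v + rhoR (T' v) u) +
          (\<Sum>i\<in>{1..n}. Tc i (rhoL (Tc (Suc n - i) u) v + rhoR (Tc (Suc n - i) v) u)) +
          T' (rhoL (T u) v + rhoR (T v) u)"
        unfolding sum_split[of _ n] e2 using od0(1) by simp
      show ?thesis
        unfolding l1 l2 ob DD_def by (rule abs_eq)
    qed
    have "order_deformation smg smv br rhoL rhoR T (Suc n) (Tc(Suc n := T')) \<longleftrightarrow>
       (\<forall>u v. (\<Sum>i\<le>Suc n. br ((Tc(Suc n := T')) i u) ((Tc(Suc n := T')) (Suc n - i) v)) =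
        (\<Sum>i\<le>Suc n. (Tc(Suc n := T')) i (rhoL ((Tc(Suc n := T')) (Suc n - i) u) v + rhoR ((Tc(Suc n := T')) (Suc n - i) v) u)))"
      unfolding order_deformation_def using A B by (auto simp: le_Suc_eq)
    then show ?thesis using C by simp
  qed
  show ?thesis
  proof
    assume "extendable smg smv br rhoL rhoR T n Tc"
    then obtain T' where l: "Vector_Spaces.linear smv smg T'" and
      o: "\<forall>u v. obstruction br rhoL rhoR n Tc [u, v] = - DD br rhoL rhoR T T' u v"
      unfolding extendable_def using od by blast
    define f where "f xs = - T' (xs ! 0)" for xs :: "'v list"
    have "cochain smv smg 1 f"
      unfolding cochain_def f_def using lin_negf[OF l]
      by (auto simp: length_Suc_conv)
    moreover have "\<forall>vs. length vs = 2 \<longrightarrow> obstruction br rhoL rhoR n Tc vs =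
        coboundary br rhoL rhoR T (2 - 1) f vs"
    proof (intro allI impI)
      fix vs :: "'v list" assume "length vs = 2"
      then obtain u v where vs: "vs = [u, v]"
        by (auto simp: length_Suc_conv numeral_2_eq_2)
      show "obstruction br rhoL rhoR n Tc vs = coboundary br rhoL rhoR T (2 - 1) f vs"
        unfolding vs using o cob[of f u v] Dneg[of T' u v] by (simp add: f_def)
    qed
    ultimately show "is_coboundary smg smv br rhoL rhoR T 2 (obstruction br rhoL rhoR n Tc)"
      unfolding is_coboundary_def by auto
  next
    assume "is_coboundary smg smv br rhoL rhoR T 2 (obstruction br rhoL rhoR n Tc)"
    then obtain f where cf: "cochain smv smg 1 f" and
      e: "\<forall>vs. length vs = 2 \<longrightarrow> obstruction br rhoL rhoR n Tc vs = coboundary br rhoL rhoR T 1 f vs"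
      unfolding is_coboundary_def by auto
    have lf: "Vector_Spaces.linear smv smg (\<lambda>v. f [v])"
      using cf[unfolded cochain_def, rule_format, of 0 "[0]"] by simp
    define T' where "T' v = - f [v]" for v
    have l: "Vector_Spaces.linear smv smg T'" unfolding T'_def using lin_negf[OF lf] .
    have "\<forall>u v. obstruction br rhoL rhoR n Tc [u, v] = - DD br rhoL rhoR T T' u v"
    proof (intro allI)
      fix u v
      have "DD br rhoL rhoR T T' u v = - DD br rhoL rhoR T (\<lambda>v. f [v]) u v"
        unfolding T'_def by (rule Dneg)
      then show "obstruction br rhoL rhoR n Tc [u, v] = - DD br rhoL rhoR T T' u v"
        using e[rule_format, of "[u,v]"] cob[of f u v] by simp
    qed
    then show "extendable smg smv br rhoL rhoR T n Tc"
      unfolding extendable_def using od[OF l] l by blast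
  qed
qed

end
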